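(* The optimal profile $\mathbf{a}^{*}$ lies in $\mathcal{D}(B):=\{\mathbf{a}\in (0,p_{1})\times \ldots \times (0,p_{K}): \sum_{k=1}^{K}c_{k}a_{k} \leq B \}$, i.e., no coordinate $a^{*}_k$ lies on the natural boundary $\{0,p_k\}$.
   Context: Let $V$ be a set of $n$ vertices and let the $\binom{n}{2}$ possible edges be partitioned into $K$ parts $\mathcal{P}_1,\ldots,\mathcal{P}_K$, where every edge in part $k$ has cost $c_k$ with $0<c_k<\infty$. Let $P_k=|\mathcal{P}_k|$ and $p_k=P_k/n$ (the average number of possible edges of part $k$ per vertex). For a budget $B\ge 0$, consider the optimization problem $(\Lambda)$: maximize $H(\mathbf{a}) = - \sum_{k=1}^{K} \left[(p_{k}-a_{k})\log(p_{k}-a_{k})+a_{k}\log(a_{k})\right]$ over $\mathbf{a}=(a_1,\ldots,a_K)$ subject to $\sum_{k=1}^{K}a_{k}c_{k} \leq B$ and $0\leq a_{k} \leq p_{k}$ for all $k\in[K]$. Let $\mathbf{a}^{*}=\mathbf{a}^{*}(B)$ denote its solution. *)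

theory Defs
  imports Complex_Main
begin

definition possible_edges :: "'v set \<Rightarrow> 'v set set" where
  "possible_edges V = {e. e \<subseteq> V \<and> card e = 2}"

definition edge_partition :: "'v set \<Rightarrow> nat \<Rightarrow> (nat \<Rightarrow> 'v set set) \<Rightarrow> bool" where
  "edge_partition V K part \<longleftrightarrow>
     (\<forall>k\<in>{1..K}. part k \<noteq> {}) \<and>
     (\<forall>k\<in>{1..K}. \<forall>l\<in>{1..K}. k \<noteq> l \<longrightarrow> part k \<inter> part l = {}) \<and>
     (\<Union>k\<in>{1..K}. part k) = possible_edges V"

definition pk :: "'v set \<Rightarrow> (nat \<Rightarrow> 'v set set) \<Rightarrow> nat \<Rightarrow> real" where
  "pk V part k = real (card (part k)) / real (card V)"

text \<open>Entropy objective H(a); note ln 0 = 0 in Isabelle, giving 0 log 0 = 0.\<close>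
definition entropyH :: "nat \<Rightarrow> (nat \<Rightarrow> real) \<Rightarrow> (nat \<Rightarrow> real) \<Rightarrow> real" where
  "entropyH K p a = - (\<Sum>k=1..K. (p k - a k) * ln (p k - a k) + a k * ln (a k))"

definition feasible :: "nat \<Rightarrow> (nat \<Rightarrow> real) \<Rightarrow> (nat \<Rightarrow> real) \<Rightarrow> real \<Rightarrow> (nat \<Rightarrow> real) \<Rightarrow> bool" where
  "feasible K p c B a \<longleftrightarrow> (\<Sum>k=1..K. a k * c k) \<le> B \<and> (\<forall>k\<in>{1..K}. 0 \<le> a k \<and> a k \<le> p k)"

definition optimal :: "nat \<Rightarrow> (nat \<Rightarrow> real) \<Rightarrow> (nat \<Rightarrow> real) \<Rightarrow> real \<Rightarrow> (nat \<Rightarrow> real) \<Rightarrow> bool" where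
  "optimal K p c B a \<longleftrightarrow> feasible K p c B a \<and>
     (\<forall>b. feasible K p c B b \<longrightarrow> entropyH K p b \<le> entropyH K p a)"

definition setD :: "nat \<Rightarrow> (nat \<Rightarrow> real) \<Rightarrow> (nat \<Rightarrow> real) \<Rightarrow> real \<Rightarrow> (nat \<Rightarrow> real) set" where
  "setD K p c B = {a. (\<forall>k\<in>{1..K}. 0 < a k \<and> a k < p k) \<and> (\<Sum>k=1..K. c k * a k) \<le> B}"

end

theory Submission
  imports Defs
begin

definition hh :: "real \<Rightarrow> real \<Rightarrow> real" where
  "hh p x = - ((p - x) * ln (p - x) + x * ln x)"

lemma H_eq: "entropyH K p a = (\<Sum>k=1..K. hh (p k) (a k))"
  unfolding entropyH_def hh_def by (simp add: sum_negf[symmetric] algebra_simps)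

lemma sum_upd:
  fixes g :: "'a \<Rightarrow> 'b \<Rightarrow> real"
  assumes "finite S" "k \<in> S"
  shows "(\<Sum>i\<in>S. g i ((a(k:=x)) i)) = (\<Sum>i\<in>S. g i (a i)) - g k (a k) + g k x"
proof -
  have "(\<Sum>i\<in>S. g i ((a(k:=x)) i)) = g k x + (\<Sum>i\<in>S-{k}. g i ((a(k:=x)) i))"
    using sum.remove[OF assms, of "\<lambda>i. g i ((a(k:=x)) i)"] by simp
  also have "(\<Sum>i\<in>S-{k}. g i ((a(k:=x)) i)) = (\<Sum>i\<in>S-{k}. g i (a i))"
    by (rule sum.cong) auto
  also have "\<dots> = (\<Sum>i\<in>S. g i (a i)) - g k (a k)"
    using sum.remove[OF assms, of "\<lambda>i. g i (a i)"] by linarith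
  finally show ?thesis by simp
qed

lemma tangent:
  assumes "0 < (y::real)" "0 \<le> z"
  shows "z * ln z \<ge> y * ln y + (ln y + 1) * (z - y)"
proof (cases "z = 0")
  case True then show ?thesis using assms by (simp add: algebra_simps)
next
  case False
  then have z: "z > 0" using assms by simp
  have "ln (y / z) \<le> y / z - 1" using ln_le_minus_one[of "y/z"] assms z by simp
  then have "ln y - ln z \<le> y / z - 1" using assms z by (simp add: ln_div)
  then have "z * (ln y - ln z) \<le> z * (y / z - 1)" using z by (simp add: mult_left_mono)
  then have "z * (ln y - ln z) \<le> y - z" using z by (simp add: algebra_simps)
  then show ?thesis by (simp add: algebra_simps)
qed

lemma gain:
  assumes "0 < p" "0 < e" "e \<le> p / 2"
  shows "hh p e - hh p 0 \<ge> e * (ln (p/2) + 1 - ln e)"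
proof -
  have t: "p * ln p \<ge> (p-e) * ln (p-e) + (ln (p-e) + 1) * e"
    using tangent[of "p-e" p] assms by simp
  have "ln (p/2) \<le> ln (p - e)" using assms by simp
  then have "e * ln (p/2) \<le> e * ln (p-e)" using assms by (simp add: mult_left_mono)
  then show ?thesis using t unfolding hh_def by (simp add: algebra_simps)
qed

lemma loss:
  assumes "0 < d" "d \<le> x / 2" "x < p"
  shows "hh p (x - d) - hh p x \<ge> - d * (ln p - ln (x/2))"
proof -
  have t1: "x * ln x \<ge> (x-d) * ln (x-d) + (ln (x-d) + 1) * d"
    using tangent[of "x-d" x] assms by simp
  have t2: "(p - x) * ln (p - x) \<ge> (p-x+d) * ln (p-x+d) + (ln (p-x+d) + 1) * (-d)"
    using tangent[of "p-x+d" "p-x"] assms by simp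
  have "ln (x/2) \<le> ln (x - d)" using assms by simp
  then have a1: "d * ln (x/2) \<le> d * ln (x-d)" using assms by (simp add: mult_left_mono)
  have "ln (p-x+d) \<le> ln p" using assms by simp
  then have a2: "d * ln (p-x+d) \<le> d * ln p" using assms by (simp add: mult_left_mono)
  have e: "p - (x - d) = p-x+d" by simp
  show ?thesis using t1 t2 a1 a2 unfolding hh_def e by (simp add: algebra_simps)
qed

lemma main:
  assumes p: "\<forall>k\<in>{1..K}. 0 < p k" and c: "\<forall>k\<in>{1..K}. 0 < c k" and B: "0 < B"
    and opt: "optimal K p c B a"
  shows "\<forall>k\<in>{1..K}. 0 < a k \<and> a k < p k"
proof -
  have fa: "feasible K p c B a" using opt unfolding optimal_def by simp
  have best: "\<And>b. feasible K p c B b \<Longrightarrow> entropyH K p b \<le> entropyH K p a"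
    using opt unfolding optimal_def by simp
  have bud: "(\<Sum>k=1..K. a k * c k) \<le> B" and bnd: "\<forall>k\<in>{1..K}. 0 \<le> a k \<and> a k \<le> p k"
    using fa unfolding feasible_def by auto
  have upH: "\<And>b k x. k \<in> {1..K} \<Longrightarrow> entropyH K p (b(k:=x)) = entropyH K p b - hh (p k) (b k) + hh (p k) x"
    unfolding H_eq by (rule sum_upd) auto
  have upS: "\<And>b k x. k \<in> {1..K} \<Longrightarrow> (\<Sum>i=1..K. (b(k:=x)) i * c i) = (\<Sum>i=1..K. b i * c i) - b k * c k + x * c k"
    by (rule sum_upd[where g="\<lambda>i y. y * c i"]) auto
  have lt: "\<forall>k\<in>{1..K}. a k < p k"
  proof (rule ccontr)
    assume "\<not> ?thesis"
    then obtain k where k: "k \<in> {1..K}" "a k = p k" using bnd by force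
    define b where "b = a(k := p k / 2)"
    have pk: "p k > 0" "c k > 0" using p c k by auto
    have "feasible K p c B b" unfolding feasible_def
    proof
      have "(\<Sum>i=1..K. b i * c i) = (\<Sum>i=1..K. a i * c i) - p k * c k + p k / 2 * c k"
        unfolding b_def using upS[OF k(1)] k by simp
      then show "(\<Sum>i=1..K. b i * c i) \<le> B" using bud pk mult_pos_pos[of "p k" "c k"] by linarith
      show "\<forall>k\<in>{1..K}. 0 \<le> b k \<and> b k \<le> p k" using bnd pk unfolding b_def by auto
    qed
    then have le: "entropyH K p b \<le> entropyH K p a" by (rule best)
    have "entropyH K p b = entropyH K p a - hh (p k) (p k) + hh (p k) (p k / 2)"
      unfolding b_def using upH[OF k(1)] k by simp
    moreover have "hh (p k) (p k / 2) - hh (p k) (p k) = p k * ln 2"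
      unfolding hh_def using pk by (simp add: ln_div algebra_simps)
    moreover have "p k * ln 2 > 0" using pk by simp
    ultimately show False using le by linarith
  qed
  have gt: "\<forall>k\<in>{1..K}. 0 < a k"
  proof (rule ccontr)
    assume "\<not> ?thesis"
    then obtain k where k: "k \<in> {1..K}" "a k = 0" using bnd by force
    have pk: "p k > 0" "c k > 0" using p c k by auto
    show False
    proof (cases "(\<Sum>i=1..K. a i * c i) < B")
      case True
      define s where "s = B - (\<Sum>i=1..K. a i * c i)"
      define e where "e = min (p k / 2) (s / c k)"
      have s: "s > 0" using True s_def by simp
      have e: "e > 0" "e \<le> p k / 2" "e \<le> s / c k" using s pk unfolding e_def by (auto simp: min_def)
      have ec: "e * c k \<le> s" using e(3) pk by (simp add: pos_le_divide_eq)
      define b where "b = a(k := e)"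
      have "feasible K p c B b" unfolding feasible_def
      proof
        have "(\<Sum>i=1..K. b i * c i) = (\<Sum>i=1..K. a i * c i) - a k * c k + e * c k"
          unfolding b_def using upS[OF k(1)] by simp
        then show "(\<Sum>i=1..K. b i * c i) \<le> B" using ec k s_def by simp
        show "\<forall>k\<in>{1..K}. 0 \<le> b k \<and> b k \<le> p k" using bnd e pk unfolding b_def by auto
      qed
      then have le: "entropyH K p b \<le> entropyH K p a" by (rule best)
      have "entropyH K p b = entropyH K p a - hh (p k) 0 + hh (p k) e"
        unfolding b_def using upH[OF k(1)] k by simp
      moreover have g: "hh (p k) e - hh (p k) 0 \<ge> e * (ln (p k/2) + 1 - ln e)"
        using gain pk e by simp
      moreover have "ln e \<le> ln (p k / 2)" using e by simp
      then have "e * (ln (p k/2) + 1 - ln e) > 0" using e mult_pos_pos[of e "ln (p k/2) + 1 - ln e"] by linarith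
      ultimately show False using le by linarith
    next
      case False
      then have tight: "(\<Sum>i=1..K. a i * c i) = B" using bud by simp
      have "\<exists>j\<in>{1..K}. a j \<noteq> 0"
      proof (rule ccontr)
        assume "\<not> ?thesis"
        then have "(\<Sum>i=1..K. a i * c i) = 0" by simp
        then show False using tight B by simp
      qed
      then obtain j where j: "j \<in> {1..K}" "a j \<noteq> 0" by blast
      have aj: "0 < a j" "a j < p j" using j bnd lt by force+
      have cj: "c j > 0" using c j by auto
      have jk: "j \<noteq> k" using j k by auto
      define r where "r = c k / c j"
      define L where "L = ln (p j) - ln (a j / 2)"
      define e where "e = min (p k / 2) (min ((p k / 2) * exp (- (r * L))) (a j / (2 * r)))"
      have r: "r > 0" unfolding r_def using pk cj by simp
      have e1: "e \<le> p k / 2" "e \<le> (p k / 2) * exp (- (r * L))" "e \<le> a j / (2 * r)"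
        unfolding e_def by auto
      have "(p k / 2) * exp (- (r * L)) > 0" "a j / (2 * r) > 0" using pk r aj by auto
      then have "e > 0" unfolding e_def using pk by simp
      note e = this e1
      define d where "d = r * e"
      have d: "d > 0" "d \<le> a j / 2" unfolding d_def using e r
        by (auto simp: pos_le_divide_eq mult.commute)
      have dc: "d * c j = e * c k" unfolding d_def r_def using cj by simp
      define b where "b = (a(k := e))(j := a j - d)"
      have bk: "(a(k := e)) j = a j" "(a(k:=e)) k = e" using jk by auto
      have "feasible K p c B b" unfolding feasible_def
      proof
        have "(\<Sum>i=1..K. b i * c i) = (\<Sum>i=1..K. a i * c i) - a k * c k + e * c k - a j * c j + (a j - d) * c j"
          unfolding b_def using upS[OF j(1), of "a(k:=e)"] upS[OF k(1), of a e] bk by simp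
        then show "(\<Sum>i=1..K. b i * c i) \<le> B" using dc k tight by (simp add: algebra_simps)
        show "\<forall>i\<in>{1..K}. 0 \<le> b i \<and> b i \<le> p i" using bnd e d aj pk unfolding b_def by auto
      qed
      then have le: "entropyH K p b \<le> entropyH K p a" by (rule best)
      have eqH: "entropyH K p b = entropyH K p a - hh (p k) 0 + hh (p k) e - hh (p j) (a j) + hh (p j) (a j - d)"
        unfolding b_def using upH[OF j(1), of "a(k:=e)"] upH[OF k(1), of a e] bk k by simp
      have g: "hh (p k) e - hh (p k) 0 \<ge> e * (ln (p k/2) + 1 - ln e)"
        using gain pk e by simp
      have l: "hh (p j) (a j - d) - hh (p j) (a j) \<ge> - d * L"
        unfolding L_def using loss d aj by simp
      have "ln e \<le> ln ((p k / 2) * exp (- (r * L)))" using e pk by simp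
      also have "\<dots> = ln (p k / 2) + ln (exp (- (r * L)))" using pk by (subst ln_mult) auto
      also have "\<dots> = ln (p k / 2) - r * L" by simp
      finally have "e * (ln (p k/2) + 1 - ln e) \<ge> e * (1 + r * L)"
        using e by (simp add: mult_left_mono)
      then have "e * (ln (p k/2) + 1 - ln e) - d * L \<ge> e"
        unfolding d_def by (simp add: algebra_simps)
      then show False using le eqH g l e by linarith
    qed
  qed
  show ?thesis using lt gt by blast
qed

theorem lemma1:
  fixes V :: "'v set" and K :: nat and part :: "nat \<Rightarrow> 'v set set"
    and c :: "nat \<Rightarrow> real" and B :: real and a :: "nat \<Rightarrow> real"
  assumes "finite V"
    and "edge_partition V K part"
    and "\<forall>k\<in>{1..K}. 0 < c k"
    and "0 < B"
    and "optimal K (pk V part) c B a"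
  shows "a \<in> setD K (pk V part) c B"
proof -
  have ppos: "\<forall>k\<in>{1..K}. 0 < pk V part k"
  proof
    fix k assume k: "k \<in> {1..K}"
    have ne: "part k \<noteq> {}" and sub: "part k \<subseteq> possible_edges V"
      using assms(2) k unfolding edge_partition_def by auto
    then obtain e where e: "e \<in> part k" by blast
    then have "e \<subseteq> V" "card e = 2" using sub unfolding possible_edges_def by auto
    then have "e \<noteq> {}" by auto
    with \<open>e \<subseteq> V\<close> have "V \<noteq> {}" by auto
    then have cV: "card V > 0" using assms(1) by (simp add: card_gt_0_iff)
    have "part k \<subseteq> Pow V" using sub unfolding possible_edges_def by auto
    then have "finite (part k)" using assms(1) finite_subset by blast
    then have "card (part k) > 0" using ne by (simp add: card_gt_0_iff)
    then show "0 < pk V part k" unfolding pk_def using cV by simp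
  qed
  have m: "\<forall>k\<in>{1..K}. 0 < a k \<and> a k < pk V part k"
    using main[OF ppos assms(3) assms(4) assms(5)] .
  have "(\<Sum>k=1..K. a k * c k) \<le> B" using assms(5) unfolding optimal_def feasible_def by simp
  then have "(\<Sum>k=1..K. c k * a k) \<le> B" by (simp add: mult.commute)
  then show ?thesis using m unfolding setD_def by simp
qed

end
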